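(* Let $u = \mathbf{1}_{[-\alpha, \alpha]}$ for some $\alpha > 0$, and for some smoothing level $\sigma > 0$ consider the associated curl field \begin{equation*} \mathcal{C}(\mathbf{x}) = \left\langle \nabla_{\mathbf{x}}[\varphi_{\sigma^2} \ast u u^{\top} ](\mathbf{x}), \begin{bmatrix} 0 & -1 \\ 1 & 0 \end{bmatrix} \mathbf{x} \right\rangle_{\ell^2}. \end{equation*} Writing $\mathbf{x} = (s, t)$, and defining \begin{equation*} f(s) = \int_{-\alpha}^{\alpha} \varphi_{\sigma^2}(s - x) \, dx, \end{equation*} we have the explicit expression \begin{equation*} \nabla_{\mathbf{x}} \mathcal{C}(\mathbf{x}) = \begin{bmatrix} s f'(s) f'(t) + f(s) f'(t) - t f(t) f''(s) \\ s f(s) f''(t) - f(t) f'(s) - t f'(s) f'(t) \end{bmatrix}, \end{equation*} and the `iterated curl field' satisfies the estimate \begin{equation*} \int_{\mathbb{R}^2} \left( \left\langle \nabla_{\mathbf{x}} \mathcal{C}(s, t), \begin{bmatrix} -t \\ s \end{bmatrix} \right\rangle_{\ell^2} \right)^2 \, ds \, dt \leq \frac{28 \alpha^4}{\pi \sigma^2} + \frac{3\alpha^6(20\sigma^2 + 4\alpha^2)}{10\pi \sigma^6 }, \end{equation*} and if $\alpha^2 \leq 1$, it also satisfies the estimate \begin{equation*} \int_{\mathbb{R}^2} \left( \left\langle \nabla_{\mathbf{x}} \mathcal{C}(s, t), \begin{bmatrix} -t \\ s \end{bmatrix} \right\rangle_{\ell^2} \right)^2 \, ds \, dt \leq \frac{3}{\pi}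 + \frac{55}{\pi \sigma^2} + \frac{4}{5 \pi \sigma^4}. \end{equation*}
   Context: For $\sigma^2 > 0$, $\varphi_{\sigma^2}(t) = \frac{1}{\sqrt{2\pi\sigma^2}} \exp(-\tfrac{1}{2 \sigma^2}t^2)$ denotes the one-dimensional gaussian, and the same symbol is used for the two-dimensional gaussian $\varphi_{\sigma^2}(s,t) = \varphi_{\sigma^2}(s)\varphi_{\sigma^2}(t)$, with the meaning clear from the dimensionality of the argument. $\mathbf{1}_{A}$ is the indicator function of a set $A$. For $u \in L^2(\mathbb{R})$, $uu^{\top}$ denotes the function $(s,t) \mapsto u(s)u(t)$ on $\mathbb{R}^2$. $\ast$ denotes convolution, $(f \ast g)(\mathbf{x}) = \int f(\mathbf{x}') g(\mathbf{x}-\mathbf{x}') \, d\mathbf{x}'$, and $\langle \cdot,\cdot\rangle_{\ell^2}$ is the euclidean inner product on $\mathbb{R}^2$. *)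

theory Defs
  imports "HOL-Analysis.Analysis"
begin

definition gauss :: "real \<Rightarrow> real \<Rightarrow> real" where
  "gauss v t = 1 / sqrt (2 * pi * v) * exp (- (t ^ 2) / (2 * v))"

definition gauss2 :: "real \<Rightarrow> real \<times> real \<Rightarrow> real" where
  "gauss2 v x = gauss v (fst x) * gauss v (snd x)"

definition outer :: "(real \<Rightarrow> real) \<Rightarrow> real \<times> real \<Rightarrow> real" where
  "outer u x = u (fst x) * u (snd x)"

definition conv2 :: "(real \<times> real \<Rightarrow> real) \<Rightarrow> (real \<times> real \<Rightarrow> real) \<Rightarrow> real \<times> real \<Rightarrow> real" where
  "conv2 f g x = (\<integral>y. f y * g (x - y) \<partial>lborel)"

definition grad :: "(real \<times> real \<Rightarrow> real) \<Rightarrow> real \<times> real \<Rightarrow> real \<times> real" where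
  "grad F x = (THE v. (F has_derivative (\<lambda>h. v \<bullet> h)) (at x))"

definition rot :: "real \<times> real \<Rightarrow> real \<times> real" where
  "rot x = (- snd x, fst x)"

definition curl_field :: "real \<Rightarrow> (real \<Rightarrow> real) \<Rightarrow> real \<times> real \<Rightarrow> real" where
  "curl_field v u x = grad (conv2 (gauss2 v) (outer u)) x \<bullet> rot x"

end

theory Submission
  imports Defs "HOL-Probability.Distributions" "HOL-Real_Asymp.Real_Asymp"
begin


definition dg :: "real \<Rightarrow> real \<Rightarrow> real" where
  "dg v z = - (z / v) * gauss v z"

definition d2g :: "real \<Rightarrow> real \<Rightarrow> real" where
  "d2g v z = (z^2 / v^2 - 1 / v) * gauss v z"

lemma gauss_nd: "v > 0 \<Longrightarrow> gauss v z = normal_density 0 (sqrt v) z"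
  by (simp add: gauss_def normal_density_def)

lemma gauss_pos: "v > 0 \<Longrightarrow> gauss v z > 0"
  by (simp add: gauss_def)

lemma gauss_cont[continuous_intros]: "v > 0 \<Longrightarrow> continuous_on A (gauss v)"
  unfolding gauss_def by (intro continuous_intros) auto

lemma gauss_isCont: "v > 0 \<Longrightarrow> isCont (gauss v) z"
  unfolding gauss_def by (intro continuous_intros) auto

lemma gauss_deriv: "v > 0 \<Longrightarrow> (gauss v has_real_derivative dg v z) (at z)"
  unfolding gauss_def dg_def
  by (auto intro!: derivative_eq_intros simp: field_simps power2_eq_square)

lemma dg_deriv: "v > 0 \<Longrightarrow> (dg v has_real_derivative d2g v z) (at z)"
  unfolding d2g_def dg_def
  by (auto intro!: derivative_eq_intros gauss_deriv simp: dg_def field_simps power2_eq_square)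

definition ffn :: "real \<Rightarrow> real \<Rightarrow> real \<Rightarrow> real" where
  "ffn v a s = (LINT x:{-a..a}|lborel. gauss v (s - x))"

definition f1n :: "real \<Rightarrow> real \<Rightarrow> real \<Rightarrow> real" where
  "f1n v a s = gauss v (s + a) - gauss v (s - a)"

definition f2n :: "real \<Rightarrow> real \<Rightarrow> real \<Rightarrow> real" where
  "f2n v a s = dg v (s + a) - dg v (s - a)"

lemma ffn_shift:
  assumes "a > 0"
  shows "ffn v a s = (LINT y:{s-a..s+a}|lborel. gauss v y)"
proof -
  have "(LINT y:{s-a..s+a}|lborel. gauss v y) = (\<integral>y. indicator {s-a..s+a} y *\<^sub>R gauss v y \<partial>lborel)"
    by (simp add: set_lebesgue_integral_def)
  also have "\<dots> = \<bar>-1\<bar> *\<^sub>R (\<integral>x. indicator {s-a..s+a} (s + (-1) * x) *\<^sub>R gauss v (s + (-1) * x) \<partial>lborel)"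
    by (rule lborel_integral_real_affine) simp
  also have "\<dots> = (\<integral>x. indicator {-a..a} x *\<^sub>R gauss v (s - x) \<partial>lborel)"
    by (simp, intro Bochner_Integration.integral_cong) (auto simp: indicator_def)
  finally show ?thesis by (simp add: ffn_def set_lebesgue_integral_def)
qed

lemma gauss_antider: "v > 0 \<Longrightarrow> \<exists>F. \<forall>x. (F has_real_derivative gauss v x) (at x)"
  using einterval_antiderivative[of "-\<infinity>" "\<infinity>" "gauss v"] gauss_isCont
  by (auto simp: has_real_derivative_iff_has_vector_derivative)

lemma ffn_eq:
  assumes "v > 0" "a > 0" and F: "\<And>x. (F has_real_derivative gauss v x) (at x)"
  shows "ffn v a s = F (s + a) - F (s - a)"
proof -
  have "ffn v a s = (LBINT y=(s-a)..(s+a). gauss v y)"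
    using assms by (simp add: ffn_shift interval_integral_Icc)
  also have "\<dots> = F (s + a) - F (s - a)"
    using assms
    by (intro interval_integral_FTC_finite)
       (auto intro!: gauss_cont has_vector_derivative_at_within DERIV_subset[OF F]
             simp: has_real_derivative_iff_has_vector_derivative[symmetric])
  finally show ?thesis .
qed

lemma ffn_deriv:
  assumes "v > 0" "a > 0"
  shows "(ffn v a has_real_derivative f1n v a s) (at s)"
proof -
  obtain F where F: "\<And>x. (F has_real_derivative gauss v x) (at x)"
    using gauss_antider[OF assms(1)] by blast
  have e: "ffn v a = (\<lambda>s. F (s + a) - F (s - a))"
    using ffn_eq[OF assms F] by auto
  show ?thesis unfolding e f1n_def
    by (auto intro!: derivative_eq_intros DERIV_chain2[OF F])
qed

lemma f1n_deriv:
  assumes "v > 0"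
  shows "(f1n v a has_real_derivative f2n v a s) (at s)"
  unfolding f1n_def[abs_def] f2n_def
  by (auto intro!: derivative_eq_intros DERIV_chain2[OF gauss_deriv[OF assms]])

lemma f2n_deriv:
  assumes "v > 0"
  shows "(f2n v a has_real_derivative (d2g v (s + a) - d2g v (s - a))) (at s)"
  unfolding f2n_def[abs_def]
  by (auto intro!: derivative_eq_intros DERIV_chain2[OF dg_deriv[OF assms]])

lemma deriv_ffn: "v > 0 \<Longrightarrow> a > 0 \<Longrightarrow> deriv (ffn v a) = f1n v a"
  using ffn_deriv DERIV_imp_deriv by blast

lemma deriv_f1n: "v > 0 \<Longrightarrow> deriv (f1n v a) = f2n v a"
  using f1n_deriv DERIV_imp_deriv by blast


lemma gauss_meas[measurable]: "gauss v \<in> borel_measurable borel"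
  unfolding gauss_def[abs_def] by measurable

lemma integral_prod_sep:
  fixes g h :: "real \<Rightarrow> real"
  assumes g: "integrable lborel g" and h: "integrable lborel h"
  shows "(\<integral>x. g (fst x) * h (snd x) \<partial>(lborel :: (real \<times> real) measure)) = integral\<^sup>L lborel g * integral\<^sup>L lborel h"
proof -
  have [measurable]: "g \<in> borel_measurable lborel" "h \<in> borel_measurable lborel"
    using g h by auto
  have int: "integrable (lborel \<Otimes>\<^sub>M lborel) (\<lambda>(x, y). g x * h y)"
  proof (rule lborel_pair.Fubini_integrable)
    show "(\<lambda>(x, y). g x * h y) \<in> borel_measurable (lborel \<Otimes>\<^sub>M lborel)" by measurable
    have "(\<lambda>x. \<integral>y. norm (case (x, y) of (x, y) \<Rightarrow> g x * h y) \<partial>lborel) = (\<lambda>x. \<bar>g x\<bar> * (\<integral>y. \<bar>h y\<bar> \<partial>lborel))"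
      by (simp add: abs_mult)
    then show "integrable lborel (\<lambda>x. \<integral>y. norm (case (x, y) of (x, y) \<Rightarrow> g x * h y) \<partial>lborel)"
      using g by simp
    show "AE x in lborel. integrable lborel (\<lambda>y. case (x, y) of (x, y) \<Rightarrow> g x * h y)"
      using h by simp
  qed
  have "(\<integral>x. g (fst x) * h (snd x) \<partial>(lborel :: (real \<times> real) measure)) =
        integral\<^sup>L (lborel \<Otimes>\<^sub>M lborel) (\<lambda>(x, y). g x * h y)"
    by (simp add: lborel_prod case_prod_beta')
  also have "\<dots> = (\<integral>x. (\<integral>y. g x * h y \<partial>lborel) \<partial>lborel)"
    using lborel_pair.integral_fst[of "\<lambda>x y. g x * h y"] int by simp
  also have "\<dots> = integral\<^sup>L lborel g * integral\<^sup>L lborel h"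
    by simp
  finally show ?thesis .
qed

lemma ffn_alt:
  assumes "a > 0"
  shows "(\<integral>y. gauss v y * indicator {-a..a} (s - y) \<partial>lborel) = ffn v a s"
proof -
  have "(\<integral>y. gauss v y * indicator {-a..a} (s - y) \<partial>lborel) =
      \<bar>-1\<bar> *\<^sub>R (\<integral>x. gauss v (s + (-1) * x) * indicator {-a..a} (s - (s + (-1) * x)) \<partial>lborel)"
    by (rule lborel_integral_real_affine) simp
  also have "\<dots> = (\<integral>x. indicator {-a..a} x *\<^sub>R gauss v (s - x) \<partial>lborel)"
    by (simp add: mult.commute)
  finally show ?thesis by (simp add: ffn_def set_lebesgue_integral_def)
qed

lemma gauss_ind_integrable:
  assumes "v > 0"
  shows "integrable lborel (\<lambda>y. gauss v y * indicator {-a..a} (s - y))"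
proof -
  have "gauss v = normal_density 0 (sqrt v)"
    using gauss_nd assms by auto
  then have "integrable lborel (gauss v)"
    using integrable_normal_density[of "sqrt v" 0] assms by simp
  then show ?thesis
    apply (rule Bochner_Integration.integrable_bound)
     apply measurable
    apply (auto simp: indicator_def)
    done
qed


lemma conv_eq:
  assumes "v > 0" "a > 0"
  shows "conv2 (gauss2 v) (outer (indicator {-a..a})) x = ffn v a (fst x) * ffn v a (snd x)"
proof -
  have "conv2 (gauss2 v) (outer (indicator {-a..a})) x =
     (\<integral>y. (gauss v (fst y) * indicator {-a..a} (fst x - fst y)) * (gauss v (snd y) * indicator {-a..a} (snd x - snd y)) \<partial>lborel)"
    unfolding conv2_def gauss2_def outer_def
    by (intro Bochner_Integration.integral_cong) (auto simp: fst_diff snd_diff)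
  also have "\<dots> = (\<integral>y. gauss v y * indicator {-a..a} (fst x - y) \<partial>lborel) * (\<integral>y. gauss v y * indicator {-a..a} (snd x - y) \<partial>lborel)"
    by (rule integral_prod_sep[where g="\<lambda>y. gauss v y * indicator {-a..a} (fst x - y)" and h="\<lambda>y. gauss v y * indicator {-a..a} (snd x - y)"])
       (use gauss_ind_integrable assms in auto)
  also have "\<dots> = ffn v a (fst x) * ffn v a (snd x)"
    using ffn_alt assms by simp
  finally show ?thesis .
qed

lemma grad_eq:
  assumes "(F has_derivative (\<lambda>h. w \<bullet> h)) (at x)"
  shows "grad F x = w"
  unfolding grad_def
proof (rule the_equality)
  show "(F has_derivative (\<lambda>h. w \<bullet> h)) (at x)" by fact
  fix w' assume "(F has_derivative (\<lambda>h. w' \<bullet> h)) (at x)"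
  then have "(\<lambda>h. w' \<bullet> h) = (\<lambda>h. w \<bullet> h)"
    using assms has_derivative_unique by blast
  then have "w' \<bullet> (w' - w) = w \<bullet> (w' - w)" by metis
  then have "(w' - w) \<bullet> (w' - w) = 0" by (simp add: inner_diff_left)
  then show "w' = w" by simp
qed

lemma ffn_fd[derivative_intros]:
  assumes "v > 0" "a > 0" "(g has_derivative g') (at z within S)"
  shows "((\<lambda>x. ffn v a (g x)) has_derivative (\<lambda>h. g' h * f1n v a (g z))) (at z within S)"
  by (rule DERIV_compose_FDERIV[OF ffn_deriv[OF assms(1,2)] assms(3)])

lemma f1n_fd[derivative_intros]:
  assumes "v > 0" "(g has_derivative g') (at z within S)"
  shows "((\<lambda>x. f1n v a (g x)) has_derivative (\<lambda>h. g' h * f2n v a (g z))) (at z within S)"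
  by (rule DERIV_compose_FDERIV[OF f1n_deriv[OF assms(1)] assms(2)])

lemma f2n_fd[derivative_intros]:
  assumes "v > 0" "(g has_derivative g') (at z within S)"
  shows "((\<lambda>x. f2n v a (g x)) has_derivative (\<lambda>h. g' h * (d2g v (g z + a) - d2g v (g z - a)))) (at z within S)"
  by (rule DERIV_compose_FDERIV[OF f2n_deriv[OF assms(1)] assms(2)])

definition GG :: "real \<Rightarrow> real \<Rightarrow> real \<times> real \<Rightarrow> real" where
  "GG v a x = ffn v a (fst x) * ffn v a (snd x)"

lemma GG_deriv:
  assumes "v > 0" "a > 0"
  shows "(GG v a has_derivative (\<lambda>h. (f1n v a (fst z) * ffn v a (snd z), ffn v a (fst z) * f1n v a (snd z)) \<bullet> h)) (at z)"
  unfolding GG_def[abs_def]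
  by (rule derivative_eq_intros refl assms)+ (auto simp: algebra_simps)

definition CC :: "real \<Rightarrow> real \<Rightarrow> real \<times> real \<Rightarrow> real" where
  "CC v a x = - snd x * f1n v a (fst x) * ffn v a (snd x) + fst x * ffn v a (fst x) * f1n v a (snd x)"

lemma curl_eq:
  assumes "v > 0" "a > 0"
  shows "curl_field v (indicator {-a..a}) = CC v a"
proof -
  have e: "conv2 (gauss2 v) (outer (indicator {-a..a})) = GG v a"
    using conv_eq[OF assms] by (auto simp: GG_def)
  show ?thesis
    unfolding curl_field_def e
    using grad_eq[OF GG_deriv[OF assms]]
    by (auto simp: CC_def rot_def fun_eq_iff)
qed

definition gradC :: "real \<Rightarrow> real \<Rightarrow> real \<times> real \<Rightarrow> real \<times> real" where
  "gradC v a x = (let s = fst x; t = snd x in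
     (s * f1n v a s * f1n v a t + ffn v a s * f1n v a t - t * ffn v a t * f2n v a s,
      s * ffn v a s * f2n v a t - ffn v a t * f1n v a s - t * f1n v a s * f1n v a t))"

lemma CC_deriv:
  assumes "v > 0" "a > 0"
  shows "(CC v a has_derivative (\<lambda>h. gradC v a z \<bullet> h)) (at z)"
  unfolding CC_def[abs_def]
  apply (rule derivative_eq_intros refl assms)+
  apply (auto simp: algebra_simps gradC_def Let_def)
  done


abbreviation nd :: "real \<Rightarrow> real \<Rightarrow> real \<Rightarrow> real" where
  "nd w \<mu> \<equiv> normal_density \<mu> (sqrt w)"

context
  fixes w \<mu> :: real
  assumes wpos: "w > 0"
begin

lemma hb0: "has_bochner_integral lborel (\<lambda>s. nd w \<mu> s) 1"
  using normal_moment_even[where k=0 and \<mu>=\<mu> and \<sigma>="sqrt w"] wpos by simp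

lemma hb1: "has_bochner_integral lborel (\<lambda>s. nd w \<mu> s * (s - \<mu>)) 0"
  using normal_moment_odd[where k=0 and \<mu>=\<mu> and \<sigma>="sqrt w"] wpos by simp

lemma hb2: "has_bochner_integral lborel (\<lambda>s. nd w \<mu> s * (s - \<mu>)^2) w"
  using normal_moment_even[where k=1 and \<mu>=\<mu> and \<sigma>="sqrt w"] wpos by simp

lemma hb3: "has_bochner_integral lborel (\<lambda>s. nd w \<mu> s * (s - \<mu>)^3) 0"
  using normal_moment_odd[where k=1 and \<mu>=\<mu> and \<sigma>="sqrt w"] wpos by (simp add: numeral_3_eq_3)

lemma hb4: "has_bochner_integral lborel (\<lambda>s. nd w \<mu> s * (s - \<mu>)^4) (3 * w^2)"
  using normal_moment_even[where k=2 and \<mu>=\<mu> and \<sigma>="sqrt w"] wpos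
  by (simp add: fact_numeral power2_eq_square field_simps)

lemma hs2: "has_bochner_integral lborel (\<lambda>s. nd w \<mu> s * s^2) (w + \<mu>^2)"
proof -
  have "has_bochner_integral lborel (\<lambda>s. nd w \<mu> s * (s - \<mu>)^2 + (2 * \<mu>) * (nd w \<mu> s * (s - \<mu>)) + \<mu>^2 * nd w \<mu> s)
     (w + (2 * \<mu>) * 0 + \<mu>^2 * 1)"
    by (intro has_bochner_integral_add has_bochner_integral_mult_right hb0 hb1 hb2)
  then show ?thesis
    by (rule has_bochner_integral_cong[THEN iffD1, rotated -1]) (auto simp: algebra_simps power2_eq_square)
qed

lemma hs4: "has_bochner_integral lborel (\<lambda>s. nd w \<mu> s * s^4) (\<mu>^4 + 6 * \<mu>^2 * w + 3 * w^2)"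
proof -
  have "has_bochner_integral lborel (\<lambda>s. nd w \<mu> s * (s - \<mu>)^4 + (4 * \<mu>) * (nd w \<mu> s * (s - \<mu>)^3)
      + (6 * \<mu>^2) * (nd w \<mu> s * (s - \<mu>)^2) + (4 * \<mu>^3) * (nd w \<mu> s * (s - \<mu>)) + \<mu>^4 * nd w \<mu> s)
     (3 * w^2 + (4 * \<mu>) * 0 + (6 * \<mu>^2) * w + (4 * \<mu>^3) * 0 + \<mu>^4 * 1)"
    by (intro has_bochner_integral_add has_bochner_integral_mult_right hb0 hb1 hb2 hb3 hb4)
  then show ?thesis
    by (rule has_bochner_integral_cong[THEN iffD1, rotated -1]) (auto simp: algebra_simps power2_eq_square power4_eq_xxxx numeral_3_eq_3)
qed

end

definition c0 :: "real \<Rightarrow> real" where "c0 v = 1 / (2 * sqrt (pi * v))"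

lemma exp_sq: "(exp (x::real))^2 = exp (2 * x)"
  by (metis exp_add mult_2 power2_eq_square)

lemma nd_half:
  assumes "v > 0"
  shows "c0 v * nd (v/2) \<mu> s = 1 / (2 * pi * v) * exp (- ((s - \<mu>)^2) / v)"
proof -
  have a: "(sqrt (v/2))^2 = v/2" using assms by simp
  have b: "2 * pi * (v/2) = pi * v" by simp
  have sq: "sqrt (pi * v) * sqrt (pi * v) = pi * v" using assms by simp
  have "c0 v * nd (v/2) \<mu> s = 1 / (2 * sqrt (pi * v)) * (1 / sqrt (pi * v) * exp (- ((s - \<mu>)^2) / v))"
    unfolding c0_def normal_density_def a b by simp
  also have "\<dots> = 1 / (2 * (sqrt (pi * v) * sqrt (pi * v))) * exp (- ((s - \<mu>)^2) / v)"
    by simp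
  finally show ?thesis unfolding sq by (simp add: mult.assoc)
qed

lemma gauss_sq:
  assumes "v > 0"
  shows "(gauss v (s - \<mu>))^2 = c0 v * nd (v/2) \<mu> s"
proof -
  have "(gauss v (s - \<mu>))^2 = (1 / sqrt (2 * pi * v))^2 * (exp (- ((s - \<mu>)^2) / (2 * v)))^2"
    by (simp add: gauss_def power_mult_distrib power_divide)
  also have "(1 / sqrt (2 * pi * v))^2 = 1 / (2 * pi * v)"
    using assms by (simp add: power_divide)
  also have "(exp (- ((s - \<mu>)^2) / (2 * v)))^2 = exp (- ((s - \<mu>)^2) / v)"
    unfolding exp_sq using assms by simp
  finally show ?thesis using nd_half[OF assms] by simp
qed

lemma gauss_pm:
  assumes "v > 0"
  shows "gauss v (s + a) * gauss v (s - a) = exp (- (a^2) / v) * (c0 v * nd (v/2) 0 s)"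
proof -
  have sq2: "sqrt (2 * pi * v) * sqrt (2 * pi * v) = 2 * pi * v" using assms by simp
  have e: "- ((s + a)^2) / (2 * v) + - ((s - a)^2) / (2 * v) = - (a^2) / v + - ((s - 0)^2) / v"
    using assms by (simp add: field_simps power2_eq_square)
  have "gauss v (s + a) * gauss v (s - a) = 1 / (sqrt (2 * pi * v) * sqrt (2 * pi * v)) * exp (- ((s + a)^2) / (2 * v) + - ((s - a)^2) / (2 * v))"
    unfolding gauss_def exp_add by simp
  also have "\<dots> = exp (- (a^2) / v) * (1 / (2 * pi * v) * exp (- ((s - 0)^2) / v))"
    unfolding sq2 e exp_add by simp
  finally show ?thesis using nd_half[OF assms, of 0 s] by simp
qed


context
  fixes v a :: real
  assumes vpos: "v > 0" and apos: "a > 0"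
begin

definition EE where "EE = exp (- (a^2) / v)"

lemma EE_pos: "EE > 0" by (simp add: EE_def)
lemma EE_le1: "EE \<le> 1" using vpos by (simp add: EE_def)
lemma EE_ge: "1 - a^2 / v \<le> EE"
  unfolding EE_def using exp_ge_add_one_self[of "- (a^2) / v"] by simp
lemma EE_half: "EE * (a^2 / v) \<le> 1 / 2"
proof -
  let ?x = "a^2 / v"
  have x0: "?x \<ge> 0" using vpos by simp
  have "1 + ?x + ?x^2 / 2 \<le> exp ?x" by (rule exp_lower_Taylor_quadratic[OF x0])
  moreover have "2 * ?x \<le> 1 + ?x + ?x^2 / 2"
    using sum_squares_ge_zero[of "?x - 1" 0] by (simp add: power2_eq_square algebra_simps)
  ultimately have "2 * ?x \<le> exp ?x" by linarith
  then have "EE * (2 * ?x) \<le> EE * exp ?x" using EE_pos by (intro mult_left_mono) auto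
  moreover have "EE * exp ?x = 1" unfolding EE_def by (simp add: exp_minus[symmetric] exp_add[symmetric])
  ultimately show ?thesis by (simp add: algebra_simps)
qed

lemma f1sq: "(f1n v a s)^2 = c0 v * (nd (v/2) (-a) s + nd (v/2) a s - 2 * EE * nd (v/2) 0 s)"
proof -
  have "(f1n v a s)^2 = (gauss v (s - (-a)))^2 + (gauss v (s - a))^2 - 2 * (gauss v (s + a) * gauss v (s - a))"
    by (simp add: f1n_def power2_eq_square algebra_simps)
  also have "\<dots> = c0 v * (nd (v/2) (-a) s + nd (v/2) a s - 2 * EE * nd (v/2) 0 s)"
    unfolding gauss_sq[OF vpos] gauss_pm[OF vpos] EE_def by (simp add: algebra_simps)
  finally show ?thesis .
qed

lemma hbP: "has_bochner_integral lborel (\<lambda>s. s^2 * (f1n v a s)^2) (c0 v * (v + 2 * a^2 - EE * v))"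
proof -
  have w: "v/2 > 0" using vpos by simp
  have "has_bochner_integral lborel
     (\<lambda>s. c0 v * (nd (v/2) (-a) s * s^2 + nd (v/2) a s * s^2 - (2 * EE) * (nd (v/2) 0 s * s^2)))
     (c0 v * ((v/2 + (-a)^2) + (v/2 + a^2) - (2 * EE) * (v/2 + 0^2)))"
    by (intro has_bochner_integral_mult_right has_bochner_integral_add has_bochner_integral_diff
          hs2[OF w])
  then show ?thesis
    by (rule has_bochner_integral_cong[THEN iffD1, rotated -1]) (auto simp: f1sq algebra_simps)
qed

lemma hbR: "has_bochner_integral lborel (\<lambda>s. (f1n v a s)^2) (c0 v * (2 - 2 * EE))"
proof -
  have w: "v/2 > 0" using vpos by simp
  have "has_bochner_integral lborel
     (\<lambda>s. c0 v * (nd (v/2) (-a) s + nd (v/2) a s - (2 * EE) * (nd (v/2) 0 s)))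
     (c0 v * (1 + 1 - (2 * EE) * 1))"
    by (intro has_bochner_integral_mult_right has_bochner_integral_add has_bochner_integral_diff
          hb0[OF w])
  then show ?thesis
    by (rule has_bochner_integral_cong[THEN iffD1, rotated -1]) (auto simp: f1sq algebra_simps)
qed

lemma f2sq: "(f2n v a s)^2 = c0 v / v^2 * (nd (v/2) (-a) s * (s - (-a))^2 + nd (v/2) a s * (s - a)^2
     - 2 * EE * (nd (v/2) 0 s * s^2 - a^2 * nd (v/2) 0 s))"
proof -
  have e1: "f2n v a s = ((s - a) * gauss v (s - a) - (s - (-a)) * gauss v (s - (-a))) / v"
    using vpos by (simp add: f2n_def dg_def field_simps)
  have "(f2n v a s)^2 = 1 / v^2 * ((s - (-a))^2 * (gauss v (s - (-a)))^2 + (s - a)^2 * (gauss v (s - a))^2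
     - 2 * (s^2 - a^2) * (gauss v (s + a) * gauss v (s - a)))"
    unfolding e1 power_divide power2_diff power_mult_distrib using vpos by (simp add: power2_eq_square field_simps)
  also have "\<dots> = c0 v / v^2 * (nd (v/2) (-a) s * (s - (-a))^2 + nd (v/2) a s * (s - a)^2
     - 2 * EE * (nd (v/2) 0 s * s^2 - a^2 * nd (v/2) 0 s))"
    unfolding gauss_sq[OF vpos] gauss_pm[OF vpos] EE_def by (simp add: algebra_simps)
  finally show ?thesis .
qed

lemma hbS: "has_bochner_integral lborel (\<lambda>s. (f2n v a s)^2) (c0 v / v^2 * (v - EE * v + 2 * EE * a^2))"
proof -
  have w: "v/2 > 0" using vpos by simp
  have "has_bochner_integral lborel
     (\<lambda>s. c0 v / v^2 * (nd (v/2) (-a) s * (s - (-a))^2 + nd (v/2) a s * (s - a)^2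
     - (2 * EE) * (nd (v/2) 0 s * s^2 - a^2 * nd (v/2) 0 s)))
     (c0 v / v^2 * (v/2 + v/2 - (2 * EE) * ((v/2 + 0^2) - a^2 * 1)))"
    by (intro has_bochner_integral_mult_right has_bochner_integral_add has_bochner_integral_diff
          hs2[OF w] hb2[OF w] hb0[OF w])
  then show ?thesis
    by (rule has_bochner_integral_cong[THEN iffD1, rotated -1]) (auto simp: f2sq algebra_simps)
qed

lemma c0_pos: "c0 v > 0" using vpos by (simp add: c0_def)

lemma P_bound: "c0 v * (v + 2 * a^2 - EE * v) \<le> c0 v * (3 * a^2)"
proof -
  have "v * (1 - EE) \<le> v * (a^2 / v)"
    using EE_ge vpos by (intro mult_left_mono) auto
  then have "v - EE * v \<le> a^2" using vpos by (simp add: algebra_simps)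
  then show ?thesis using c0_pos by (intro mult_left_mono) auto
qed

lemma S_bound1: "c0 v / v^2 * (v - EE * v + 2 * EE * a^2) \<le> c0 v / v^2 * (3 * a^2)"
proof -
  have "v * (1 - EE) \<le> v * (a^2 / v)"
    using EE_ge vpos by (intro mult_left_mono) auto
  then have "v - EE * v \<le> a^2" using vpos by (simp add: algebra_simps)
  moreover have "EE * a^2 \<le> a^2" using EE_le1 mult_right_mono[of EE 1 "a^2"] by simp
  ultimately show ?thesis using c0_pos vpos by (intro mult_left_mono) auto
qed

lemma S_bound2: "c0 v / v^2 * (v - EE * v + 2 * EE * a^2) \<le> 2 * c0 v / v"
proof -
  have "2 * (EE * (a^2 / v)) * v \<le> 1 * v" using EE_half vpos by (intro mult_right_mono) auto
  then have "2 * EE * a^2 \<le> v" using vpos by (simp add: field_simps)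
  moreover have "EE * v \<ge> 0" using EE_pos vpos by simp
  ultimately have "v - EE * v + 2 * EE * a^2 \<le> 2 * v" by linarith
  then have "c0 v / v^2 * (v - EE * v + 2 * EE * a^2) \<le> c0 v / v^2 * (2 * v)"
    using c0_pos vpos by (intro mult_left_mono) auto
  also have "\<dots> = 2 * c0 v / v" using vpos by (simp add: power2_eq_square field_simps)
  finally show ?thesis .
qed

end


lemma cs_int:
  fixes g :: "real \<Rightarrow> real"
  assumes cd: "c < d" and cont: "continuous_on {c..d} g"
  shows "(integral {c..d} g)^2 \<le> (d - c) * integral {c..d} (\<lambda>x. (g x)^2)"
proof -
  define I where "I = integral {c..d} g"
  define m where "m = I / (d - c)"
  have ig: "g integrable_on {c..d}" using cont by (rule integrable_continuous_interval)
  have ig2: "(\<lambda>x. (g x)^2) integrable_on {c..d}"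
    using cont by (intro integrable_continuous_interval continuous_intros)
  have ig3: "(\<lambda>x. (-2 * m) * g x + m^2) integrable_on {c..d}"
    using cont by (intro integrable_continuous_interval continuous_intros)
  have "0 \<le> integral {c..d} (\<lambda>x. (g x - m)^2)"
    using cont by (intro integral_nonneg integrable_continuous_interval continuous_intros) auto
  also have "(\<lambda>x. (g x - m)^2) = (\<lambda>x. (g x)^2 + ((-2 * m) * g x + m^2))"
    by (auto simp: power2_eq_square algebra_simps)
  also have "integral {c..d} \<dots> = integral {c..d} (\<lambda>x. (g x)^2) + integral {c..d} (\<lambda>x. (-2 * m) * g x + m^2)"
    using ig2 ig3 by (rule integral_add)
  also have "integral {c..d} (\<lambda>x. (-2 * m) * g x + m^2) = (-2 * m) * I + (d - c) * m^2"
    using ig cd cont by (subst integral_add) (auto simp: I_def content_real intro!: integrable_continuous_interval continuous_intros)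
  finally have "0 \<le> integral {c..d} (\<lambda>x. (g x)^2) + ((-2 * m) * I + (d - c) * m^2)" .
  then have "0 \<le> (d - c) * (integral {c..d} (\<lambda>x. (g x)^2) + ((-2 * m) * I + (d - c) * m^2))"
    using cd by simp
  also have "\<dots> = (d - c) * integral {c..d} (\<lambda>x. (g x)^2) - I^2"
  proof -
    have dm: "I = (d - c) * m" using cd by (simp add: m_def)
    show ?thesis unfolding dm by (simp add: power2_eq_square algebra_simps)
  qed
  finally show ?thesis by (simp add: I_def)
qed

context
  fixes v a :: real
  assumes vpos: "v > 0" and apos: "a > 0"
begin

lemma ffn_cont: "continuous_on A (ffn v a)"
  using ffn_deriv[OF vpos apos] DERIV_isCont continuous_at_imp_continuous_on by blast

lemma f1n_cont: "continuous_on A (f1n v a)"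
  using f1n_deriv[OF vpos] DERIV_isCont continuous_at_imp_continuous_on by blast

lemma f2n_cont: "continuous_on A (f2n v a)"
  using f2n_deriv[OF vpos] DERIV_isCont continuous_at_imp_continuous_on by blast

lemma ffn_meas[measurable]: "ffn v a \<in> borel_measurable borel"
  by (intro borel_measurable_continuous_onI ffn_cont)
lemma f1n_meas[measurable]: "f1n v a \<in> borel_measurable borel"
  by (intro borel_measurable_continuous_onI f1n_cont)
lemma f2n_meas[measurable]: "f2n v a \<in> borel_measurable borel"
  by (intro borel_measurable_continuous_onI f2n_cont)

lemma gauss_shift_cont: "continuous_on A (\<lambda>x. gauss v (s - x))"
  using vpos unfolding gauss_def by (intro continuous_intros) auto

lemma ffn_HK: "ffn v a s = integral {-a..a} (\<lambda>x. gauss v (s - x))"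
  unfolding ffn_def
  by (rule set_borel_integral_eq_integral(2), rule borel_integrable_atLeastAtMost', rule gauss_shift_cont)

lemma ffn_nonneg: "ffn v a s \<ge> 0"
  unfolding ffn_HK
  by (intro integral_nonneg integrable_continuous_interval gauss_shift_cont)
     (use gauss_pos[OF vpos] in \<open>auto simp: less_imp_le\<close>)

lemma ffn_sq_le: "(ffn v a s)^2 \<le> 2 * a * c0 v * integral {-a..a} (\<lambda>x. nd (v/2) x s)"
proof -
  have "(ffn v a s)^2 \<le> (a - (-a)) * integral {-a..a} (\<lambda>x. (gauss v (s - x))^2)"
    unfolding ffn_HK using apos by (intro cs_int gauss_shift_cont) auto
  also have "(\<lambda>x. (gauss v (s - x))^2) = (\<lambda>x. c0 v * nd (v/2) x s)"
    using gauss_sq[OF vpos] by auto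
  finally show ?thesis by simp
qed

lemma nd_cont_mu: "w > 0 \<Longrightarrow> continuous_on A (\<lambda>x. nd w x s)"
  unfolding normal_density_def by (intro continuous_intros) auto

lemma M_bound:
  fixes p m :: "real \<Rightarrow> real" and I :: real
  assumes pm[measurable]: "p \<in> borel_measurable borel" and p0: "\<And>s. 0 \<le> p s"
    and hm: "\<And>x. has_bochner_integral lborel (\<lambda>s. nd (v/2) x s * p s) (m x)"
    and hI: "(m has_integral I) {-a..a}"
  shows "(\<integral>\<^sup>+s. ennreal (p s * (ffn v a s)^2) \<partial>lborel) \<le> ennreal (2 * a * c0 v * I)"
proof -
  have w: "v/2 > 0" using vpos by simp
  have c0p: "c0 v > 0" using vpos by (simp add: c0_def)
  have m0: "m x \<ge> 0" for x
  proof -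
    have "m x = integral\<^sup>L lborel (\<lambda>s. nd (v/2) x s * p s)"
      using has_bochner_integral_integral_eq[OF hm] by simp
    also have "\<dots> \<ge> 0" using p0 by (intro Bochner_Integration.integral_nonneg) auto
    finally show ?thesis .
  qed
  have inner: "ennreal (integral {-a..a} (\<lambda>x. nd (v/2) x s * p s)) =
      (\<integral>\<^sup>+x. ennreal (nd (v/2) x s * p s) * indicator {-a..a} x \<partial>lborel)" for s
  proof -
    have "((\<lambda>x. nd (v/2) x s * p s) has_integral integral {-a..a} (\<lambda>x. nd (v/2) x s * p s)) {-a..a}"
      by (intro integrable_integral integrable_continuous_interval continuous_intros nd_cont_mu w)
    then show ?thesis
      by (subst nn_integral_has_integral_lebesgue') (auto intro: p0 mult_nonneg_nonneg)
  qed
  have "(\<integral>\<^sup>+s. ennreal (p s * (ffn v a s)^2) \<partial>lborel) \<le>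
        (\<integral>\<^sup>+s. ennreal (2 * a * c0 v) * ennreal (integral {-a..a} (\<lambda>x. nd (v/2) x s * p s)) \<partial>lborel)"
  proof (intro nn_integral_mono)
    fix s
    have "p s * (ffn v a s)^2 \<le> p s * (2 * a * c0 v * integral {-a..a} (\<lambda>x. nd (v/2) x s))"
      by (intro mult_left_mono ffn_sq_le p0)
    also have "\<dots> = 2 * a * c0 v * integral {-a..a} (\<lambda>x. nd (v/2) x s * p s)"
      by (simp add: mult_ac)
    finally have le: "p s * (ffn v a s)^2 \<le> 2 * a * c0 v * integral {-a..a} (\<lambda>x. nd (v/2) x s * p s)" .
    have "0 \<le> integral {-a..a} (\<lambda>x. nd (v/2) x s * p s)"
      using p0 by (intro integral_nonneg integrable_continuous_interval continuous_intros nd_cont_mu w) auto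
    then have "ennreal (2 * a * c0 v) * ennreal (integral {-a..a} (\<lambda>x. nd (v/2) x s * p s)) =
        ennreal (2 * a * c0 v * integral {-a..a} (\<lambda>x. nd (v/2) x s * p s))"
      using apos c0p by (subst ennreal_mult) auto
    then show "ennreal (p s * (ffn v a s)^2) \<le> ennreal (2 * a * c0 v) * ennreal (integral {-a..a} (\<lambda>x. nd (v/2) x s * p s))"
      using le by (simp add: ennreal_leI)
  qed
  also have "\<dots> = ennreal (2 * a * c0 v) * (\<integral>\<^sup>+s. (\<integral>\<^sup>+x. ennreal (nd (v/2) x s * p s) * indicator {-a..a} x \<partial>lborel) \<partial>lborel)"
    unfolding inner by (subst nn_integral_cmult) (auto simp: normal_density_def)
  also have "(\<integral>\<^sup>+s. (\<integral>\<^sup>+x. ennreal (nd (v/2) x s * p s) * indicator {-a..a} x \<partial>lborel) \<partial>lborel) =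
     (\<integral>\<^sup>+x. (\<integral>\<^sup>+s. ennreal (nd (v/2) x s * p s) * indicator {-a..a} x \<partial>lborel) \<partial>lborel)"
    by (rule lborel_pair.Fubini') (simp add: normal_density_def)
  also have "\<dots> = (\<integral>\<^sup>+x. ennreal (m x) * indicator {-a..a} x \<partial>lborel)"
  proof (intro nn_integral_cong)
    fix x
    have "(\<integral>\<^sup>+s. ennreal (nd (v/2) x s * p s) \<partial>lborel) = ennreal (m x)"
      using hm p0
      by (subst nn_integral_eq_integral) (auto simp: has_bochner_integral_iff)
    then show "(\<integral>\<^sup>+s. ennreal (nd (v/2) x s * p s) * indicator {-a..a} x \<partial>lborel) = ennreal (m x) * indicator {-a..a} x"
      by (subst nn_integral_multc) (auto simp: normal_density_def)
  qed
  also have "\<dots> = ennreal I"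
    using hI m0 by (subst nn_integral_has_integral_lebesgue') auto
  finally have fin: "(\<integral>\<^sup>+s. ennreal (p s * (ffn v a s)^2) \<partial>lborel) \<le> ennreal (2 * a * c0 v) * ennreal I" .
  have I0: "I \<ge> 0" using has_integral_nonneg[OF hI] m0 by auto
  have "ennreal (2 * a * c0 v) * ennreal I = ennreal (2 * a * c0 v * I)"
    using apos c0p I0 by (subst ennreal_mult) auto
  then show ?thesis using fin by simp
qed

end


lemma ibp_zero:
  fixes h h' :: "real \<Rightarrow> real"
  assumes d: "\<And>x. (h has_real_derivative h' x) (at x)" and c: "\<And>x. isCont h' x"
    and i: "integrable lborel h'" and lt: "(h \<longlongrightarrow> 0) at_top" and lb: "(h \<longlongrightarrow> 0) at_bot"
  shows "integral\<^sup>L lborel h' = 0"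
proof -
  have "(LBINT x=-\<infinity>..\<infinity>. h' x) = 0 - 0"
    by (rule interval_integral_FTC_integrable)
       (use d c i lt lb in \<open>auto simp: ereal_tendsto_simps1 set_integrable_def has_real_derivative_iff_has_vector_derivative[symmetric]\<close>)
  then show ?thesis
    by (simp add: interval_lebesgue_integral_def set_lebesgue_integral_def)
qed

lemma abs_pow_le: "k \<le> 4 \<Longrightarrow> \<bar>s::real\<bar>^k \<le> 1 + s^4"
proof (cases "\<bar>s\<bar> \<le> 1")
  case True
  then have "\<bar>s\<bar>^k \<le> 1" by (simp add: power_le_one)
  then show ?thesis by (simp add: add_increasing2)
next
  case False
  assume k: "k \<le> 4"
  then have "\<bar>s\<bar>^k \<le> \<bar>s\<bar>^4" using False by (intro power_increasing) auto
  also have "\<dots> = s^4" by (simp add: power_even_abs)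
  finally show ?thesis by simp
qed

context
  fixes v a :: real
  assumes vpos: "v > 0" and apos: "a > 0"
begin

definition GB :: "real \<Rightarrow> real" where
  "GB s = (1 + s^4) * ((gauss v (s - a))^2 + (gauss v (s + a))^2)"

lemma GB_top: "(GB \<longlongrightarrow> 0) at_top"
proof -
  have 1: "((\<lambda>s::real. (1 + s^4) * (1 / sqrt (2 * pi * v) * exp (- ((s - a)^2) / (2 * v)))^2) \<longlongrightarrow> 0) at_top"
    using vpos by real_asymp
  have 2: "((\<lambda>s::real. (1 + s^4) * (1 / sqrt (2 * pi * v) * exp (- ((s + a)^2) / (2 * v)))^2) \<longlongrightarrow> 0) at_top"
    using vpos by real_asymp
  show ?thesis using tendsto_add[OF 1 2] unfolding GB_def gauss_def by (simp add: algebra_simps)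
qed

lemma GB_bot: "(GB \<longlongrightarrow> 0) at_bot"
proof -
  have 1: "((\<lambda>s::real. (1 + s^4) * (1 / sqrt (2 * pi * v) * exp (- ((s - a)^2) / (2 * v)))^2) \<longlongrightarrow> 0) at_bot"
    using vpos by real_asymp
  have 2: "((\<lambda>s::real. (1 + s^4) * (1 / sqrt (2 * pi * v) * exp (- ((s + a)^2) / (2 * v)))^2) \<longlongrightarrow> 0) at_bot"
    using vpos by real_asymp
  show ?thesis using tendsto_add[OF 1 2] unfolding GB_def gauss_def by (simp add: algebra_simps)
qed

lemma gauss_mono: "\<bar>y\<bar> \<le> \<bar>z\<bar> \<Longrightarrow> gauss v z \<le> gauss v y"
proof -
  assume "\<bar>y\<bar> \<le> \<bar>z\<bar>"
  then have "y^2 \<le> z^2" by (metis abs_le_square_iff)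
  then have "- (z^2) / (2 * v) \<le> - (y^2) / (2 * v)" using vpos by (simp add: divide_right_mono)
  then have "exp (- (z^2) / (2 * v)) \<le> exp (- (y^2) / (2 * v))" by simp
  then show ?thesis unfolding gauss_def using vpos by (intro mult_left_mono) auto
qed

lemma ffn_tail: "\<bar>s\<bar> \<ge> a \<Longrightarrow> ffn v a s \<le> 2 * a * (gauss v (s - a) + gauss v (s + a))"
proof -
  assume sa: "\<bar>s\<bar> \<ge> a"
  have "ffn v a s \<le> integral {-a..a} (\<lambda>x. gauss v (s - a) + gauss v (s + a))"
    unfolding ffn_HK[OF vpos apos]
  proof (rule integral_le)
    show "(\<lambda>x. gauss v (s - x)) integrable_on {-a..a}"
      by (intro integrable_continuous_interval gauss_shift_cont[OF vpos apos])
    show "(\<lambda>x. gauss v (s - a) + gauss v (s + a)) integrable_on {-a..a}"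
      by (intro integrable_continuous_interval continuous_intros)
    fix x assume x: "x \<in> {-a..a}"
    show "gauss v (s - x) \<le> gauss v (s - a) + gauss v (s + a)"
    proof (cases "s \<ge> 0")
      case True
      then have "gauss v (s - x) \<le> gauss v (s - a)" using sa x by (intro gauss_mono) auto
      then show ?thesis using gauss_pos[OF vpos, of "s + a"] by linarith
    next
      case False
      then have "gauss v (s - x) \<le> gauss v (s + a)" using sa x by (intro gauss_mono) auto
      then show ?thesis using gauss_pos[OF vpos, of "s - a"] by linarith
    qed
  qed
  also have "\<dots> = 2 * a * (gauss v (s - a) + gauss v (s + a))"
    using apos by (simp add: content_real)
  finally show ?thesis .
qed

lemma G_sq: "(gauss v (s - a) + gauss v (s + a))^2 \<le> 2 * ((gauss v (s - a))^2 + (gauss v (s + a))^2)"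
  using sum_squares_ge_zero[of "gauss v (s - a) - gauss v (s + a)" 0]
  by (simp add: power2_eq_square algebra_simps)

lemma lim_by_GB:
  fixes h :: "real \<Rightarrow> real"
  assumes F: "F = at_top \<or> F = at_bot" and k: "k \<le> 4" and C: "C \<ge> 0"
    and b: "\<And>s. \<bar>s\<bar> \<ge> a \<Longrightarrow> \<bar>h s\<bar> \<le> C * \<bar>s\<bar>^k * (gauss v (s - a) + gauss v (s + a))^2"
  shows "(h \<longlongrightarrow> 0) F"
proof (rule Lim_null_comparison)
  have ev: "eventually (\<lambda>s. \<bar>s\<bar> \<ge> a) F"
  proof -
    have t: "eventually (\<lambda>s. \<bar>s\<bar> \<ge> a) at_top"
      using eventually_ge_at_top[of a] by (rule eventually_mono) auto
    have b: "eventually (\<lambda>s. \<bar>s\<bar> \<ge> a) at_bot"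
      using eventually_le_at_bot[of "-a"] by (rule eventually_mono) auto
    show ?thesis using F t b by auto
  qed
  show "eventually (\<lambda>s. norm (h s) \<le> (2 * C) * GB s) F"
    using ev
  proof eventually_elim
    case (elim s)
    have "\<bar>h s\<bar> \<le> C * \<bar>s\<bar>^k * (gauss v (s - a) + gauss v (s + a))^2" using b elim by blast
    also have "\<dots> \<le> C * (1 + s^4) * (2 * ((gauss v (s - a))^2 + (gauss v (s + a))^2))"
      using C abs_pow_le[OF k, of s] G_sq
      by (intro mult_mono mult_left_mono) auto
    also have "\<dots> = (2 * C) * GB s" by (simp add: GB_def)
    finally show ?case by simp
  qed
  show "((\<lambda>s. (2 * C) * GB s) \<longlongrightarrow> 0) F"
    using F tendsto_mult_right_zero[OF GB_top] tendsto_mult_right_zero[OF GB_bot] by auto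
qed

end


lemma int_prod:
  fixes p q :: "real \<Rightarrow> real"
  assumes [measurable]: "p \<in> borel_measurable borel" "q \<in> borel_measurable borel"
    and ip: "integrable lborel (\<lambda>s. (p s)^2)" and iq: "integrable lborel (\<lambda>s. (q s)^2)"
  shows "integrable lborel (\<lambda>s. p s * q s)"
proof (rule Bochner_Integration.integrable_bound[OF Bochner_Integration.integrable_add[OF ip iq]])
  show "(\<lambda>s. p s * q s) \<in> borel_measurable lborel" by measurable
  show "AE x in lborel. norm (p x * q x) \<le> norm ((p x)^2 + (q x)^2)"
  proof (intro AE_I2)
    fix x
    have "2 * \<bar>p x\<bar> * \<bar>q x\<bar> \<le> (p x)^2 + (q x)^2"
      using sum_squares_ge_zero[of "\<bar>p x\<bar> - \<bar>q x\<bar>" 0]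
      by (simp add: power2_eq_square algebra_simps)
    moreover have "0 \<le> \<bar>p x\<bar> * \<bar>q x\<bar>" by simp
    ultimately show "norm (p x * q x) \<le> norm ((p x)^2 + (q x)^2)"
      by (simp add: abs_mult, linarith)
  qed
qed

context
  fixes v a :: real
  assumes vpos: "v > 0" and apos: "a > 0"
begin

lemmas [measurable] = ffn_meas[OF vpos apos] f1n_meas[OF vpos apos] f2n_meas[OF vpos apos]

definition g1 where "g1 s = s * f1n v a s"
definition g4 where "g4 s = s^2 * ffn v a s"

lemma g1_meas[measurable]: "g1 \<in> borel_measurable borel"
  unfolding g1_def[abs_def] using f1n_meas[OF vpos apos] by measurable
lemma g4_meas[measurable]: "g4 \<in> borel_measurable borel"
  unfolding g4_def[abs_def] using ffn_meas[OF vpos apos] by measurable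

lemma M0_nn: "(\<integral>\<^sup>+s. ennreal ((ffn v a s)^2) \<partial>lborel) \<le> ennreal (2 * a * c0 v * (2 * a))"
proof -
  have w: "v/2 > 0" using vpos by simp
  have "(\<integral>\<^sup>+s. ennreal (1 * (ffn v a s)^2) \<partial>lborel) \<le> ennreal (2 * a * c0 v * (2 * a))"
  proof (rule M_bound[OF vpos apos, where m="\<lambda>x. 1"])
    show "(\<lambda>s. 1::real) \<in> borel_measurable borel" by simp
    show "\<And>x. has_bochner_integral lborel (\<lambda>s. nd (v/2) x s * 1) 1"
      using hb0[OF w] by simp
    show "((\<lambda>x. 1::real) has_integral 2 * a) {-a..a}"
      using has_integral_const_real[of "1::real" "-a" a] apos by (simp add: content_real)
  qed auto
  then show ?thesis by simp
qed

lemma M4_nn: "(\<integral>\<^sup>+s. ennreal (s^4 * (ffn v a s)^2) \<partial>lborel) \<le>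
   ennreal (2 * a * c0 v * (2 * a^5 / 5 + 4 * (v/2) * a^3 + 6 * (v/2)^2 * a))"
proof (rule M_bound[OF vpos apos, where m="\<lambda>x. x^4 + 6 * x^2 * (v/2) + 3 * (v/2)^2"])
  have w: "v/2 > 0" using vpos by simp
  show "(\<lambda>s::real. s^4) \<in> borel_measurable borel" by measurable
  show "\<And>s. 0 \<le> (s::real)^4" by simp
  show "\<And>x. has_bochner_integral lborel (\<lambda>s. nd (v/2) x s * s^4) (x^4 + 6 * x^2 * (v/2) + 3 * (v/2)^2)"
    using hs4[OF w] by simp
  let ?F = "\<lambda>x::real. x^5 / 5 + 2 * (v/2) * x^3 + 3 * (v/2)^2 * x"
  have "((\<lambda>x. x^4 + 6 * x^2 * (v/2) + 3 * (v/2)^2) has_integral (?F a - ?F (-a))) {-a..a}"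
    using apos
    by (intro fundamental_theorem_of_calculus)
       (auto intro!: derivative_eq_intros simp: has_real_derivative_iff_has_vector_derivative[symmetric]
             field_simps)
  moreover have "?F a - ?F (-a) = 2 * a^5 / 5 + 4 * (v/2) * a^3 + 6 * (v/2)^2 * a"
    by (simp add: field_simps)
  ultimately show "((\<lambda>x. x^4 + 6 * x^2 * (v/2) + 3 * (v/2)^2) has_integral (2 * a^5 / 5 + 4 * (v/2) * a^3 + 6 * (v/2)^2 * a)) {-a..a}"
    by metis
qed

lemma int_ff2: "integrable lborel (\<lambda>s. (ffn v a s)^2)"
  by (rule integrableI_nonneg) (use M0_nn in \<open>auto simp: top.not_eq_extremum intro: le_less_trans\<close>)

lemma int_s4ff2: "integrable lborel (\<lambda>s. s^4 * (ffn v a s)^2)"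
  by (rule integrableI_nonneg) (use M4_nn in \<open>auto simp: top.not_eq_extremum intro: le_less_trans\<close>)

lemma int_g1: "integrable lborel (\<lambda>s. (g1 s)^2)"
  using integrable.intros[OF hbP[OF vpos apos]] by (simp add: g1_def power_mult_distrib)
lemma int_g2: "integrable lborel (\<lambda>s. (ffn v a s)^2)" by (rule int_ff2)
lemma int_g3: "integrable lborel (\<lambda>s. (f2n v a s)^2)"
  using integrable.intros[OF hbS[OF vpos apos]] by simp
lemma int_g4: "integrable lborel (\<lambda>s. (g4 s)^2)"
  using int_s4ff2 by (simp add: g4_def power_mult_distrib flip: power_mult)
lemma int_g5: "integrable lborel (\<lambda>s. (f1n v a s)^2)"
  using integrable.intros[OF hbR[OF vpos apos]] by simp

lemmas ints = int_g1 int_g2 int_g3 int_g4 int_g5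

lemma ff_absb: "\<bar>s\<bar> \<ge> a \<Longrightarrow> \<bar>ffn v a s\<bar> \<le> 2 * a * (gauss v (s - a) + gauss v (s + a))"
  using ffn_tail[OF vpos apos] ffn_nonneg[OF vpos apos] by (simp add: abs_of_nonneg)

lemma f1_absb: "\<bar>f1n v a s\<bar> \<le> gauss v (s - a) + gauss v (s + a)"
  using gauss_pos[OF vpos, of "s - a"] gauss_pos[OF vpos, of "s + a"] by (simp add: f1n_def abs_le_iff)

lemma G_nonneg: "0 \<le> gauss v (s - a) + gauss v (s + a)"
  using gauss_pos[OF vpos, of "s - a"] gauss_pos[OF vpos, of "s + a"] by simp

lemma cont_ff: "isCont (ffn v a) x" using ffn_deriv[OF vpos apos] DERIV_isCont by blast
lemma cont_f1: "isCont (f1n v a) x" using f1n_deriv[OF vpos] DERIV_isCont by blast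
lemma cont_f2: "isCont (f2n v a) x" using f2n_deriv[OF vpos] DERIV_isCont by blast

lemma prod_le: "\<bar>x\<bar> \<le> X \<Longrightarrow> \<bar>y\<bar> \<le> Y \<Longrightarrow> \<bar>x * y\<bar> \<le> X * (Y::real)"
  by (simp add: abs_mult mult_mono')

lemma ibp1: "integral\<^sup>L lborel (\<lambda>s. (ffn v a s)^2 + 2 * (g1 s * ffn v a s)) = 0"
proof (rule ibp_zero)
  fix x show "((\<lambda>s. s * (ffn v a s)^2) has_real_derivative (ffn v a x)^2 + 2 * (g1 x * ffn v a x)) (at x)"
    by (rule derivative_eq_intros ffn_deriv[OF vpos apos] refl)+ (simp add: g1_def algebra_simps power2_eq_square)
  show "isCont (\<lambda>s. (ffn v a s)^2 + 2 * (g1 s * ffn v a s)) x"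
    unfolding g1_def using cont_ff cont_f1 by (intro continuous_intros) auto
next
  show "integrable lborel (\<lambda>s. (ffn v a s)^2 + 2 * (g1 s * ffn v a s))"
    by (intro Bochner_Integration.integrable_add integrable_mult_right int_prod ints) measurable
  have b: "\<bar>s * (ffn v a s)^2\<bar> \<le> (4 * a^2) * \<bar>s\<bar>^1 * (gauss v (s - a) + gauss v (s + a))^2" if "\<bar>s\<bar> \<ge> a" for s
  proof -
    have "\<bar>s * ((ffn v a s) * (ffn v a s))\<bar> \<le> \<bar>s\<bar> * ((2 * a * (gauss v (s - a) + gauss v (s + a))) * (2 * a * (gauss v (s - a) + gauss v (s + a))))"
      using ff_absb[OF that] by (intro prod_le) auto
    then show ?thesis by (simp add: power2_eq_square algebra_simps)
  qed
  show "((\<lambda>s. s * (ffn v a s)^2) \<longlongrightarrow> 0) at_top"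
    by (rule lim_by_GB[OF vpos apos _ _ _ b]) (use apos in auto)
  show "((\<lambda>s. s * (ffn v a s)^2) \<longlongrightarrow> 0) at_bot"
    by (rule lim_by_GB[OF vpos apos _ _ _ b]) (use apos in auto)
qed

lemma ibp2: "integral\<^sup>L lborel (\<lambda>s. 3 * (ffn v a s * g4 s) + 2 * (g1 s * g4 s)) = 0"
proof (rule ibp_zero)
  fix x show "((\<lambda>s. s^3 * (ffn v a s)^2) has_real_derivative (\<lambda>s. 3 * (ffn v a s * g4 s) + 2 * (g1 s * g4 s)) x) (at x)"
    by (rule derivative_eq_intros ffn_deriv[OF vpos apos] f1n_deriv[OF vpos] refl)+ (simp add: g1_def g4_def algebra_simps power2_eq_square eval_nat_numeral)
  show "isCont (\<lambda>s. 3 * (ffn v a s * g4 s) + 2 * (g1 s * g4 s)) x"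
    unfolding g1_def g4_def using cont_ff cont_f1 cont_f2 by (intro continuous_intros) auto
next
  show "integrable lborel (\<lambda>s. 3 * (ffn v a s * g4 s) + 2 * (g1 s * g4 s))"
    by (intro Bochner_Integration.integrable_add integrable_mult_right int_prod ints) measurable
  have b: "\<bar>s^3 * (ffn v a s)^2\<bar> \<le> (4 * a^2) * \<bar>s\<bar>^3 * (gauss v (s - a) + gauss v (s + a))^2" if "\<bar>s\<bar> \<ge> a" for s
  proof -
    have "\<bar>(s * s * s) * (ffn v a s * ffn v a s)\<bar> \<le> (\<bar>s\<bar> * \<bar>s\<bar> * \<bar>s\<bar>) * ((2 * a * (gauss v (s - a) + gauss v (s + a))) * (2 * a * (gauss v (s - a) + gauss v (s + a))))"
      using ff_absb[OF that] f1_absb[of s] G_nonneg[of s] by (intro prod_le) (auto intro: prod_le)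
    then show ?thesis by (simp add: power2_eq_square algebra_simps eval_nat_numeral)
  qed
  show "((\<lambda>s. s^3 * (ffn v a s)^2) \<longlongrightarrow> 0) at_top"
    by (rule lim_by_GB[OF vpos apos _ _ _ b]) (use apos in auto)
  show "((\<lambda>s. s^3 * (ffn v a s)^2) \<longlongrightarrow> 0) at_bot"
    by (rule lim_by_GB[OF vpos apos _ _ _ b]) (use apos in auto)
qed

lemma ibp3: "integral\<^sup>L lborel (\<lambda>s. (f1n v a s)^2 + 2 * (g1 s * f2n v a s)) = 0"
proof (rule ibp_zero)
  fix x show "((\<lambda>s. s * (f1n v a s)^2) has_real_derivative (\<lambda>s. (f1n v a s)^2 + 2 * (g1 s * f2n v a s)) x) (at x)"
    by (rule derivative_eq_intros ffn_deriv[OF vpos apos] f1n_deriv[OF vpos] refl)+ (simp add: g1_def g4_def algebra_simps power2_eq_square eval_nat_numeral)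
  show "isCont (\<lambda>s. (f1n v a s)^2 + 2 * (g1 s * f2n v a s)) x"
    unfolding g1_def g4_def using cont_ff cont_f1 cont_f2 by (intro continuous_intros) auto
next
  show "integrable lborel (\<lambda>s. (f1n v a s)^2 + 2 * (g1 s * f2n v a s))"
    by (intro Bochner_Integration.integrable_add integrable_mult_right int_prod ints) measurable
  have b: "\<bar>s * (f1n v a s)^2\<bar> \<le> (1) * \<bar>s\<bar>^1 * (gauss v (s - a) + gauss v (s + a))^2" if "\<bar>s\<bar> \<ge> a" for s
  proof -
    have "\<bar>s * (f1n v a s * f1n v a s)\<bar> \<le> \<bar>s\<bar> * ((gauss v (s - a) + gauss v (s + a)) * (gauss v (s - a) + gauss v (s + a)))"
      using ff_absb[OF that] f1_absb[of s] G_nonneg[of s] by (intro prod_le) (auto intro: prod_le)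
    then show ?thesis by (simp add: power2_eq_square algebra_simps eval_nat_numeral)
  qed
  show "((\<lambda>s. s * (f1n v a s)^2) \<longlongrightarrow> 0) at_top"
    by (rule lim_by_GB[OF vpos apos _ _ _ b]) (use apos in auto)
  show "((\<lambda>s. s * (f1n v a s)^2) \<longlongrightarrow> 0) at_bot"
    by (rule lim_by_GB[OF vpos apos _ _ _ b]) (use apos in auto)
qed

lemma ibp4: "integral\<^sup>L lborel (\<lambda>s. (f1n v a s)^2 + ffn v a s * f2n v a s) = 0"
proof (rule ibp_zero)
  fix x show "((\<lambda>s. ffn v a s * f1n v a s) has_real_derivative (\<lambda>s. (f1n v a s)^2 + ffn v a s * f2n v a s) x) (at x)"
    by (rule derivative_eq_intros ffn_deriv[OF vpos apos] f1n_deriv[OF vpos] refl)+ (simp add: g1_def g4_def algebra_simps power2_eq_square eval_nat_numeral)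
  show "isCont (\<lambda>s. (f1n v a s)^2 + ffn v a s * f2n v a s) x"
    unfolding g1_def g4_def using cont_ff cont_f1 cont_f2 by (intro continuous_intros) auto
next
  show "integrable lborel (\<lambda>s. (f1n v a s)^2 + ffn v a s * f2n v a s)"
    by (intro Bochner_Integration.integrable_add integrable_mult_right int_prod ints) measurable
  have b: "\<bar>ffn v a s * f1n v a s\<bar> \<le> (2 * a) * \<bar>s\<bar>^0 * (gauss v (s - a) + gauss v (s + a))^2" if "\<bar>s\<bar> \<ge> a" for s
  proof -
    have "\<bar>ffn v a s * f1n v a s\<bar> \<le> (2 * a * (gauss v (s - a) + gauss v (s + a))) * (gauss v (s - a) + gauss v (s + a))"
      using ff_absb[OF that] f1_absb[of s] G_nonneg[of s] by (intro prod_le) (auto intro: prod_le)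
    then show ?thesis by (simp add: power2_eq_square algebra_simps eval_nat_numeral)
  qed
  show "((\<lambda>s. ffn v a s * f1n v a s) \<longlongrightarrow> 0) at_top"
    by (rule lim_by_GB[OF vpos apos _ _ _ b]) (use apos in auto)
  show "((\<lambda>s. ffn v a s * f1n v a s) \<longlongrightarrow> 0) at_bot"
    by (rule lim_by_GB[OF vpos apos _ _ _ b]) (use apos in auto)
qed

lemma ibp5: "integral\<^sup>L lborel (\<lambda>s. 2 * (g1 s * ffn v a s) + (g1 s)^2 + g4 s * f2n v a s) = 0"
proof (rule ibp_zero)
  fix x show "((\<lambda>s. s^2 * ffn v a s * f1n v a s) has_real_derivative (\<lambda>s. 2 * (g1 s * ffn v a s) + (g1 s)^2 + g4 s * f2n v a s) x) (at x)"
    by (rule derivative_eq_intros ffn_deriv[OF vpos apos] f1n_deriv[OF vpos] refl)+ (simp add: g1_def g4_def algebra_simps power2_eq_square eval_nat_numeral)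
  show "isCont (\<lambda>s. 2 * (g1 s * ffn v a s) + (g1 s)^2 + g4 s * f2n v a s) x"
    unfolding g1_def g4_def using cont_ff cont_f1 cont_f2 by (intro continuous_intros) auto
next
  show "integrable lborel (\<lambda>s. 2 * (g1 s * ffn v a s) + (g1 s)^2 + g4 s * f2n v a s)"
    by (intro Bochner_Integration.integrable_add integrable_mult_right int_prod ints) measurable
  have b: "\<bar>s^2 * ffn v a s * f1n v a s\<bar> \<le> (2 * a) * \<bar>s\<bar>^2 * (gauss v (s - a) + gauss v (s + a))^2" if "\<bar>s\<bar> \<ge> a" for s
  proof -
    have "\<bar>(s * s) * (ffn v a s * f1n v a s)\<bar> \<le> (\<bar>s\<bar> * \<bar>s\<bar>) * ((2 * a * (gauss v (s - a) + gauss v (s + a))) * (gauss v (s - a) + gauss v (s + a)))"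
      using ff_absb[OF that] f1_absb[of s] G_nonneg[of s] by (intro prod_le) (auto intro: prod_le)
    then show ?thesis by (simp add: power2_eq_square algebra_simps eval_nat_numeral)
  qed
  show "((\<lambda>s. s^2 * ffn v a s * f1n v a s) \<longlongrightarrow> 0) at_top"
    by (rule lim_by_GB[OF vpos apos _ _ _ b]) (use apos in auto)
  show "((\<lambda>s. s^2 * ffn v a s * f1n v a s) \<longlongrightarrow> 0) at_bot"
    by (rule lim_by_GB[OF vpos apos _ _ _ b]) (use apos in auto)
qed

end


lemma bil:
  fixes \<gamma> :: "nat \<Rightarrow> real \<Rightarrow> real"
  assumes "\<And>k k'. k < n \<Longrightarrow> k' < n \<Longrightarrow> integrable lborel (\<lambda>t. \<gamma> k t * \<gamma> k' t)"
  shows "has_bochner_integral lborel (\<lambda>t. (\<Sum>k<n. b k * \<gamma> k t) * (\<Sum>k'<n. b' k' * \<gamma> k' t))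
     (\<Sum>k<n. \<Sum>k'<n. b k * b' k' * integral\<^sup>L lborel (\<lambda>t. \<gamma> k t * \<gamma> k' t))"
proof -
  have "has_bochner_integral lborel (\<lambda>t. \<Sum>k<n. \<Sum>k'<n. (b k * b' k') * (\<gamma> k t * \<gamma> k' t))
     (\<Sum>k<n. \<Sum>k'<n. (b k * b' k') * integral\<^sup>L lborel (\<lambda>t. \<gamma> k t * \<gamma> k' t))"
    using assms
    by (intro has_bochner_integral_sum has_bochner_integral_mult_right)
       (auto intro: has_bochner_integral_integrable)
  moreover have "\<And>t. (\<Sum>k<n. b k * \<gamma> k t) * (\<Sum>k'<n. b' k' * \<gamma> k' t) =
      (\<Sum>k<n. \<Sum>k'<n. (b k * b' k') * (\<gamma> k t * \<gamma> k' t))"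
    by (simp add: sum_product mult_ac)
  ultimately show ?thesis by simp
qed

context
  fixes v a :: real
  assumes vpos: "v > 0" and apos: "a > 0"
begin

lemmas [measurable] = ffn_meas[OF vpos apos] f1n_meas[OF vpos apos] f2n_meas[OF vpos apos]
  g1_meas[OF vpos apos] g4_meas[OF vpos apos]

definition gam :: "nat \<Rightarrow> real \<Rightarrow> real" where
  "gam l = (if l = 0 then g1 v a else if l = 1 then ffn v a else if l = 2 then f2n v a else g4 v a)"

definition ccf :: "nat \<Rightarrow> nat \<Rightarrow> real" where
  "ccf k l = (if k = 0 \<and> l = 0 then -2 else if (k = 1 \<and> l = 0) \<or> (k = 0 \<and> l = 1) then -1
     else if (k = 3 \<and> l = 2) \<or> (k = 2 \<and> l = 3) then 1 else 0)"

definition bet :: "nat \<Rightarrow> real \<Rightarrow> real" where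
  "bet l s = (\<Sum>k<4. ccf k l * gam k s)"

definition Gm :: "nat \<Rightarrow> nat \<Rightarrow> real" where
  "Gm k k' = integral\<^sup>L lborel (\<lambda>t. gam k t * gam k' t)"

lemma gam_meas[measurable]: "gam k \<in> borel_measurable borel"
  unfolding gam_def by simp

lemma gam_sq: "integrable lborel (\<lambda>t. (gam k t)^2)"
  unfolding gam_def using ints[OF vpos apos] by auto

lemma gam_int: "integrable lborel (\<lambda>t. gam k t * gam k' t)"
  by (intro int_prod gam_meas gam_sq)

lemma g1e: "g1 v a s = s * f1n v a s" by (rule g1_def[OF vpos apos])
lemma g4e: "g4 v a s = s^2 * ffn v a s" by (rule g4_def[OF vpos apos])

lemma D_eq: "gradC v a (s, t) \<bullet> rot (s, t) = (\<Sum>l<4. bet l s * gam l t)"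
  by (simp add: gradC_def rot_def bet_def gam_def ccf_def g1e g4e eval_nat_numeral algebra_simps)

lemma J_eq: "(\<integral>\<^sup>+x. ennreal ((gradC v a x \<bullet> rot x)^2) \<partial>lborel) =
   ennreal (\<Sum>l<4. \<Sum>l'<4. Gm l l' * (\<Sum>k<4. \<Sum>k'<4. ccf k l * ccf k' l' * Gm k k'))"
proof -
  define Q where "Q s = (\<Sum>l<4. \<Sum>l'<4. bet l s * bet l' s * Gm l l')" for s
  have inner: "has_bochner_integral lborel (\<lambda>t. (gradC v a (s, t) \<bullet> rot (s, t))^2) (Q s)" for s
  proof -
    have "has_bochner_integral lborel (\<lambda>t. (\<Sum>l<4. bet l s * gam l t) * (\<Sum>l'<4. bet l' s * gam l' t)) (Q s)"
      unfolding Q_def Gm_def by (rule bil) (rule gam_int)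
    then show ?thesis by (simp add: D_eq power2_eq_square)
  qed
  have Q0: "Q s \<ge> 0" for s
    using has_bochner_integral_integral_eq[OF inner[of s]] Bochner_Integration.integral_nonneg[of lborel "\<lambda>t. (gradC v a (s, t) \<bullet> rot (s, t))^2"]
    by simp
  have outer: "has_bochner_integral lborel Q (\<Sum>l<4. \<Sum>l'<4. Gm l l' * (\<Sum>k<4. \<Sum>k'<4. ccf k l * ccf k' l' * Gm k k'))"
  proof -
    have "has_bochner_integral lborel (\<lambda>s. \<Sum>l<4. \<Sum>l'<4. Gm l l' * (bet l s * bet l' s))
        (\<Sum>l<4. \<Sum>l'<4. Gm l l' * (\<Sum>k<4. \<Sum>k'<4. ccf k l * ccf k' l' * Gm k k'))"
    proof (intro has_bochner_integral_sum has_bochner_integral_mult_right)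
      fix l l'
      show "has_bochner_integral lborel (\<lambda>s. bet l s * bet l' s) (\<Sum>k<4. \<Sum>k'<4. ccf k l * ccf k' l' * Gm k k')"
        unfolding bet_def Gm_def by (rule bil) (rule gam_int)
    qed
    then show ?thesis unfolding Q_def by (simp add: mult_ac)
  qed
  have meas: "(\<lambda>x. ennreal ((gradC v a x \<bullet> rot x)^2)) \<in> borel_measurable (lborel \<Otimes>\<^sub>M lborel)"
    unfolding gradC_def rot_def Let_def by measurable
  have "(\<integral>\<^sup>+x. ennreal ((gradC v a x \<bullet> rot x)^2) \<partial>lborel) =
      (\<integral>\<^sup>+x. ennreal ((gradC v a x \<bullet> rot x)^2) \<partial>(lborel \<Otimes>\<^sub>M lborel))"
    by (simp add: lborel_prod)
  also have "\<dots> = (\<integral>\<^sup>+s. (\<integral>\<^sup>+t. ennreal ((gradC v a (s, t) \<bullet> rot (s, t))^2) \<partial>lborel) \<partial>lborel)"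
    by (rule lborel.nn_integral_fst[symmetric, OF meas])
  also have "\<dots> = (\<integral>\<^sup>+s. ennreal (Q s) \<partial>lborel)"
    by (intro nn_integral_cong nn_integral_eq_integral[THEN trans])
       (use inner in \<open>auto simp: has_bochner_integral_iff\<close>)
  also have "\<dots> = ennreal (\<Sum>l<4. \<Sum>l'<4. Gm l l' * (\<Sum>k<4. \<Sum>k'<4. ccf k l * ccf k' l' * Gm k k'))"
    using outer Q0 by (subst nn_integral_eq_integral) (auto simp: has_bochner_integral_iff)
  finally show ?thesis .
qed

end


context
  fixes v a :: real
  assumes vpos: "v > 0" and apos: "a > 0"
begin

lemmas [measurable] = ffn_meas[OF vpos apos] f1n_meas[OF vpos apos] f2n_meas[OF vpos apos]
  g1_meas[OF vpos apos] g4_meas[OF vpos apos]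

lemma ip: "integrable lborel (\<lambda>s. p s * q s)"
  if "p \<in> {g1 v a, ffn v a, f2n v a, g4 v a, f1n v a}" "q \<in> {g1 v a, ffn v a, f2n v a, g4 v a, f1n v a}" for p q
proof -
  have m: "r \<in> borel_measurable borel" and i: "integrable lborel (\<lambda>s. (r s)^2)"
    if "r \<in> {g1 v a, ffn v a, f2n v a, g4 v a, f1n v a}" for r
    using that ints[OF vpos apos] by auto
  show ?thesis using that by (intro int_prod m i)
qed

definition "PP = integral\<^sup>L lborel (\<lambda>s. g1 v a s * g1 v a s)"
definition "M0 = integral\<^sup>L lborel (\<lambda>s. ffn v a s * ffn v a s)"
definition "SS = integral\<^sup>L lborel (\<lambda>s. f2n v a s * f2n v a s)"
definition "M4 = integral\<^sup>L lborel (\<lambda>s. g4 v a s * g4 v a s)"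
definition "RR = integral\<^sup>L lborel (\<lambda>s. f1n v a s * f1n v a s)"
definition "M2 = integral\<^sup>L lborel (\<lambda>s. ffn v a s * g4 v a s)"

lemma G01: "integral\<^sup>L lborel (\<lambda>s. g1 v a s * ffn v a s) = - M0 / 2"
proof -
  have "integral\<^sup>L lborel (\<lambda>s. (ffn v a s)^2 + 2 * (g1 v a s * ffn v a s)) =
     M0 + 2 * integral\<^sup>L lborel (\<lambda>s. g1 v a s * ffn v a s)"
    unfolding M0_def power2_eq_square by (subst Bochner_Integration.integral_add) (auto intro!: ip)
  then show ?thesis using ibp1[OF vpos apos] by simp
qed

lemma G03: "integral\<^sup>L lborel (\<lambda>s. g1 v a s * g4 v a s) = - 3 / 2 * M2"
proof -
  have "integral\<^sup>L lborel (\<lambda>s. 3 * (ffn v a s * g4 v a s) + 2 * (g1 v a s * g4 v a s)) =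
     3 * M2 + 2 * integral\<^sup>L lborel (\<lambda>s. g1 v a s * g4 v a s)"
    unfolding M2_def by (subst Bochner_Integration.integral_add) (auto intro!: ip)
  then show ?thesis using ibp2[OF vpos apos] by simp
qed

lemma G02: "integral\<^sup>L lborel (\<lambda>s. g1 v a s * f2n v a s) = - RR / 2"
proof -
  have "integral\<^sup>L lborel (\<lambda>s. (f1n v a s)^2 + 2 * (g1 v a s * f2n v a s)) =
     RR + 2 * integral\<^sup>L lborel (\<lambda>s. g1 v a s * f2n v a s)"
    unfolding RR_def power2_eq_square by (subst Bochner_Integration.integral_add) (auto intro!: ip)
  then show ?thesis using ibp3[OF vpos apos] by simp
qed

lemma G12: "integral\<^sup>L lborel (\<lambda>s. ffn v a s * f2n v a s) = - RR"
proof -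
  have "integral\<^sup>L lborel (\<lambda>s. (f1n v a s)^2 + ffn v a s * f2n v a s) =
     RR + integral\<^sup>L lborel (\<lambda>s. ffn v a s * f2n v a s)"
    unfolding RR_def power2_eq_square by (subst Bochner_Integration.integral_add) (auto intro!: ip)
  then show ?thesis using ibp4[OF vpos apos] by simp
qed

lemma G23: "integral\<^sup>L lborel (\<lambda>s. f2n v a s * g4 v a s) = M0 - PP"
proof -
  have "integral\<^sup>L lborel (\<lambda>s. 2 * (g1 v a s * ffn v a s) + (g1 v a s)^2 + g4 v a s * f2n v a s) =
     2 * integral\<^sup>L lborel (\<lambda>s. g1 v a s * ffn v a s) + PP + integral\<^sup>L lborel (\<lambda>s. g4 v a s * f2n v a s)"
  proof -
    have iA: "integrable lborel (\<lambda>s. 2 * (g1 v a s * ffn v a s))" by (auto intro!: ip)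
    have iB: "integrable lborel (\<lambda>s. (g1 v a s)^2)" unfolding power2_eq_square by (auto intro!: ip)
    have iC: "integrable lborel (\<lambda>s. g4 v a s * f2n v a s)" by (auto intro!: ip)
    have "integral\<^sup>L lborel (\<lambda>s. 2 * (g1 v a s * ffn v a s) + (g1 v a s)^2 + g4 v a s * f2n v a s) =
       integral\<^sup>L lborel (\<lambda>s. 2 * (g1 v a s * ffn v a s) + (g1 v a s)^2) + integral\<^sup>L lborel (\<lambda>s. g4 v a s * f2n v a s)"
      by (rule Bochner_Integration.integral_add[OF Bochner_Integration.integrable_add[OF iA iB] iC])
    also have "integral\<^sup>L lborel (\<lambda>s. 2 * (g1 v a s * ffn v a s) + (g1 v a s)^2) =
       integral\<^sup>L lborel (\<lambda>s. 2 * (g1 v a s * ffn v a s)) + integral\<^sup>L lborel (\<lambda>s. (g1 v a s)^2)"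
      by (rule Bochner_Integration.integral_add[OF iA iB])
    finally show ?thesis by (simp add: PP_def power2_eq_square)
  qed
  then show ?thesis using ibp5[OF vpos apos] G01 by (simp add: mult.commute)
qed

lemma J_val: "(\<integral>\<^sup>+x. ennreal ((gradC v a x \<bullet> rot x)^2) \<partial>lborel) =
   ennreal (6 * PP^2 - 6 * M0 * PP + 5 / 2 * M0^2 + 2 * SS * M4 - 10 * RR * M2)"
proof -
  have c: "integral\<^sup>L lborel (\<lambda>s. q s * p s) = integral\<^sup>L lborel (\<lambda>s. p s * q s)" for p q :: "real \<Rightarrow> real"
    by (simp add: mult.commute)
  have gv: "Gm v a 0 0 = PP" "Gm v a 1 1 = M0" "Gm v a 2 2 = SS" "Gm v a 3 3 = M4"
       "Gm v a 0 1 = - M0 / 2" "Gm v a 1 0 = - M0 / 2"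
       "Gm v a 0 2 = - RR / 2" "Gm v a 2 0 = - RR / 2"
       "Gm v a 0 3 = - 3 / 2 * M2" "Gm v a 3 0 = - 3 / 2 * M2"
       "Gm v a 1 2 = - RR" "Gm v a 2 1 = - RR"
       "Gm v a 1 3 = M2" "Gm v a 3 1 = M2"
       "Gm v a 2 3 = M0 - PP" "Gm v a 3 2 = M0 - PP"
    using G01 G02 G03 G12 G23
    by (simp_all add: Gm_def[OF vpos apos] gam_def[OF vpos apos] PP_def M0_def SS_def M4_def M2_def mult.commute)
  have sum4: "(\<Sum>l<(4::nat). F l) = F 0 + F 1 + F 2 + F 3" for F :: "nat \<Rightarrow> real"
    by (simp add: eval_nat_numeral)
  show ?thesis
    unfolding J_eq[OF vpos apos] sum4 gv
    by (simp add: ccf_def[OF vpos apos] power2_eq_square algebra_simps)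
qed

lemma c0_sq: "(c0 v)^2 = 1 / (4 * pi * v)"
  using vpos by (simp add: c0_def power_divide power_mult_distrib)

lemma PP_eq: "PP = c0 v * (v + 2 * a^2 - EE v a * v)"
  unfolding PP_def using has_bochner_integral_integral_eq[OF hbP[OF vpos apos]]
  by (simp add: g1e[OF vpos apos] power_mult_distrib power2_eq_square mult_ac)

lemma SS_eq: "SS = c0 v / v^2 * (v - EE v a * v + 2 * EE v a * a^2)"
  unfolding SS_def using has_bochner_integral_integral_eq[OF hbS[OF vpos apos]]
  by (simp add: power2_eq_square)

lemma RR_nn: "RR \<ge> 0" unfolding RR_def by simp
lemma M2_nn: "M2 \<ge> 0" unfolding M2_def g4e[OF vpos apos]
  by (intro Bochner_Integration.integral_nonneg) (simp add: ffn_nonneg[OF vpos apos])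
lemma M0_nn': "M0 \<ge> 0" unfolding M0_def by simp
lemma M4_nn': "M4 \<ge> 0" unfolding M4_def by simp
lemma PP_nn: "PP \<ge> 0" unfolding PP_def by simp
lemma SS_nn: "SS \<ge> 0" unfolding SS_def by simp

lemma M0_le: "M0 \<le> 4 * a^2 * c0 v"
proof -
  have "ennreal M0 = (\<integral>\<^sup>+s. ennreal ((ffn v a s)^2) \<partial>lborel)"
    unfolding M0_def using int_ff2[OF vpos apos]
    by (subst nn_integral_eq_integral) (auto simp: power2_eq_square)
  also have "\<dots> \<le> ennreal (2 * a * c0 v * (2 * a))" by (rule M0_nn[OF vpos apos])
  finally have "M0 \<le> 2 * a * c0 v * (2 * a)"
    using apos c0_pos[OF vpos apos] by (subst (asm) ennreal_le_iff) auto
  then show ?thesis by (simp add: power2_eq_square mult_ac)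
qed

definition "Mb = 2 * a * c0 v * (2 * a^5 / 5 + 4 * (v/2) * a^3 + 6 * (v/2)^2 * a)"

lemma M4_le: "M4 \<le> Mb"
proof -
  have e: "(\<lambda>s. g4 v a s * g4 v a s) = (\<lambda>s. s^4 * (ffn v a s)^2)"
    by (auto simp: g4e[OF vpos apos] power2_eq_square eval_nat_numeral mult_ac)
  have "ennreal M4 = (\<integral>\<^sup>+s. ennreal (s^4 * (ffn v a s)^2) \<partial>lborel)"
    unfolding M4_def e using int_s4ff2[OF vpos apos]
    by (subst nn_integral_eq_integral) auto
  also have "\<dots> \<le> ennreal Mb" unfolding Mb_def by (rule M4_nn[OF vpos apos])
  finally show "M4 \<le> Mb"
    using apos c0_pos[OF vpos apos] vpos by (subst (asm) ennreal_le_iff) (auto simp: Mb_def)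
qed

lemma J_le_main: "6 * PP^2 - 6 * M0 * PP + 5 / 2 * M0^2 + 2 * SS * M4 - 10 * RR * M2 \<le> 6 * PP^2 + 5 / 2 * M0^2 + 2 * SS * M4"
proof -
  have "0 \<le> 6 * M0 * PP" using M0_nn' PP_nn by simp
  moreover have "0 \<le> 10 * RR * M2" using RR_nn M2_nn by simp
  ultimately show ?thesis by linarith
qed

lemma PP_le: "PP \<le> 3 * a^2 * c0 v"
  using PP_eq P_bound[OF vpos apos] by (simp add: mult_ac)

lemma SS_le1: "SS \<le> 3 * a^2 * c0 v / v^2"
  using SS_eq S_bound1[OF vpos apos] by (simp add: mult_ac)

lemma SS_le2: "SS \<le> 2 * c0 v / v"
  using SS_eq S_bound2[OF vpos apos] by simp

lemma J_b1: "6 * PP^2 - 6 * M0 * PP + 5 / 2 * M0^2 + 2 * SS * M4 - 10 * RR * M2 \<le>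
   28 * a^4 / (pi * v) + 3 * a^6 * (20 * v + 4 * a^2) / (10 * pi * v^3)"
proof -
  have c0p: "c0 v > 0" by (rule c0_pos[OF vpos apos])
  have "6 * PP^2 + 5 / 2 * M0^2 + 2 * SS * M4 \<le> 6 * (3 * a^2 * c0 v)^2 + 5 / 2 * (4 * a^2 * c0 v)^2 + 2 * (3 * a^2 * c0 v / v^2) * Mb"
  proof -
    have "PP^2 \<le> (3 * a^2 * c0 v)^2" using PP_nn PP_le by (intro power_mono) auto
    moreover have "M0^2 \<le> (4 * a^2 * c0 v)^2" using M0_nn' M0_le by (intro power_mono) auto
    moreover have "SS * M4 \<le> (3 * a^2 * c0 v / v^2) * Mb"
      using SS_nn SS_le1 M4_nn' M4_le by (intro mult_mono) auto
    ultimately show ?thesis by linarith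
  qed
  also have "\<dots> = (c0 v)^2 * (54 * a^4 + 40 * a^4 + 12 * a^3 / v^2 * (2 * a^5 / 5 + 2 * v * a^3 + 3 / 2 * v^2 * a))"
    unfolding Mb_def using vpos
    by (simp add: power2_eq_square field_simps eval_nat_numeral)
  also have "\<dots> = 28 * a^4 / (pi * v) + 3 * a^6 * (20 * v + 4 * a^2) / (10 * pi * v^3)"
    unfolding c0_sq using vpos
    by (simp add: power2_eq_square field_simps eval_nat_numeral)
  finally show ?thesis using J_le_main by linarith
qed

lemma J_b2: "a^2 \<le> 1 \<Longrightarrow> 6 * PP^2 - 6 * M0 * PP + 5 / 2 * M0^2 + 2 * SS * M4 - 10 * RR * M2 \<le>
   3 / pi + 55 / (pi * v) + 4 / (5 * pi * v^2)"
proof -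
  assume a1: "a^2 \<le> 1"
  have c0p: "c0 v > 0" by (rule c0_pos[OF vpos apos])
  have "6 * PP^2 + 5 / 2 * M0^2 + 2 * SS * M4 \<le> 6 * (3 * a^2 * c0 v)^2 + 5 / 2 * (4 * a^2 * c0 v)^2 + 2 * (2 * c0 v / v) * Mb"
  proof -
    have "PP^2 \<le> (3 * a^2 * c0 v)^2" using PP_nn PP_le by (intro power_mono) auto
    moreover have "M0^2 \<le> (4 * a^2 * c0 v)^2" using M0_nn' M0_le by (intro power_mono) auto
    moreover have "SS * M4 \<le> (2 * c0 v / v) * Mb"
      using SS_nn SS_le2 M4_nn' M4_le by (intro mult_mono) auto
    ultimately show ?thesis by linarith
  qed
  also have "\<dots> = (c0 v)^2 * (54 * a^4 + 40 * a^4 + 8 * a / v * (2 * a^5 / 5 + 2 * v * a^3 + 3 / 2 * v^2 * a))"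
    unfolding Mb_def using vpos
    by (simp add: power2_eq_square field_simps eval_nat_numeral)
  also have "\<dots> = 55 / 2 * (a^2)^2 / (pi * v) + 4 / 5 * (a^2)^3 / (pi * v^2) + 3 * a^2 / pi"
    unfolding c0_sq using vpos
    by (simp add: power2_eq_square field_simps eval_nat_numeral)
  also have "\<dots> \<le> 55 / 2 * 1 / (pi * v) + 4 / 5 * 1 / (pi * v^2) + 3 * 1 / pi"
  proof -
    have a2: "0 \<le> a^2" by simp
    have "(a^2)^2 \<le> 1" by (rule power_le_one[OF a2 a1])
    moreover have "(a^2)^3 \<le> 1" by (rule power_le_one[OF a2 a1])
    ultimately show ?thesis using vpos a1
      by (intro add_mono divide_right_mono mult_left_mono) auto
  qed
  also have "\<dots> \<le> 3 / pi + 55 / (pi * v) + 4 / (5 * pi * v^2)"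
    using vpos by (simp add: field_simps)
  finally show ?thesis using J_le_main by linarith
qed

end


theorem mainTheorem15:
  fixes \<alpha> \<sigma> :: real and u f :: "real \<Rightarrow> real"
  assumes "\<alpha> > 0" and "\<sigma> > 0"
    and "u = indicator {-\<alpha>..\<alpha>}"
    and "f = (\<lambda>s. LINT x:{-\<alpha>..\<alpha>}|lborel. gauss (\<sigma>^2) (s - x))"
  shows "(\<forall>s t. (curl_field (\<sigma>^2) u has_derivative
            (\<lambda>h. (s * deriv f s * deriv f t + f s * deriv f t - t * f t * deriv (deriv f) s,
                   s * f s * deriv (deriv f) t - f t * deriv f s - t * deriv f s * deriv f t) \<bullet> h))
            (at (s, t)))
     \<and> (\<integral>\<^sup>+ x. ennreal ((grad (curl_field (\<sigma>^2) u) x \<bullet> rot x) ^ 2) \<partial>lborel)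
         \<le> ennreal (28 * \<alpha>^4 / (pi * \<sigma>^2)
                    + 3 * \<alpha>^6 * (20 * \<sigma>^2 + 4 * \<alpha>^2) / (10 * pi * \<sigma>^6))
     \<and> (\<alpha>^2 \<le> 1 \<longrightarrow>
         (\<integral>\<^sup>+ x. ennreal ((grad (curl_field (\<sigma>^2) u) x \<bullet> rot x) ^ 2) \<partial>lborel)
           \<le> ennreal (3 / pi + 55 / (pi * \<sigma>^2) + 4 / (5 * pi * \<sigma>^4)))"
proof -
  define v where "v = \<sigma>^2"
  have vpos: "v > 0" using assms(2) by (simp add: v_def)
  have apos: "\<alpha> > 0" by (rule assms(1))
  have fe: "f = ffn v \<alpha>" using assms(4) by (simp add: v_def ffn_def[abs_def])
  have ce: "curl_field (\<sigma>^2) u = CC v \<alpha>"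
    using curl_eq[OF vpos apos] assms(3) by (simp add: v_def)
  have d1: "deriv f = f1n v \<alpha>" using deriv_ffn[OF vpos apos] fe by simp
  have d2: "deriv (deriv f) = f2n v \<alpha>" using deriv_f1n[OF vpos] d1 by simp
  have gr: "grad (CC v \<alpha>) x = gradC v \<alpha> x" for x
    by (rule grad_eq[OF CC_deriv[OF vpos apos]])
  have part1: "\<forall>s t. (curl_field (\<sigma>^2) u has_derivative
            (\<lambda>h. (s * deriv f s * deriv f t + f s * deriv f t - t * f t * deriv (deriv f) s,
                   s * f s * deriv (deriv f) t - f t * deriv f s - t * deriv f s * deriv f t) \<bullet> h))
            (at (s, t))"
  proof (intro allI)
    fix s t
    show "(curl_field (\<sigma>^2) u has_derivative
            (\<lambda>h. (s * deriv f s * deriv f t + f s * deriv f t - t * f t * deriv (deriv f) s,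
                   s * f s * deriv (deriv f) t - f t * deriv f s - t * deriv f s * deriv f t) \<bullet> h))
            (at (s, t))"
      using CC_deriv[OF vpos apos, of "(s, t)"]
      unfolding ce d1 d2 unfolding fe by (simp add: gradC_def Let_def deriv_f1n[OF vpos])
  qed
  have Jv: "(\<integral>\<^sup>+ x. ennreal ((grad (curl_field (\<sigma>^2) u) x \<bullet> rot x) ^ 2) \<partial>lborel) =
     ennreal (6 * (PP v \<alpha>)^2 - 6 * M0 v \<alpha> * PP v \<alpha> + 5 / 2 * (M0 v \<alpha>)^2 + 2 * SS v \<alpha> * M4 v \<alpha> - 10 * RR v \<alpha> * M2 v \<alpha>)"
    unfolding ce gr by (rule J_val[OF vpos apos])
  have s6: "\<sigma>^6 = v^3" by (simp add: v_def flip: power_mult)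
  have s4: "\<sigma>^4 = v^2" by (simp add: v_def flip: power_mult)
  have part2: "(\<integral>\<^sup>+ x. ennreal ((grad (curl_field (\<sigma>^2) u) x \<bullet> rot x) ^ 2) \<partial>lborel)
         \<le> ennreal (28 * \<alpha>^4 / (pi * \<sigma>^2)
                    + 3 * \<alpha>^6 * (20 * \<sigma>^2 + 4 * \<alpha>^2) / (10 * pi * \<sigma>^6))"
    unfolding Jv unfolding s6 v_def[symmetric] by (intro ennreal_leI J_b1[OF vpos apos])
  have part3: "\<alpha>^2 \<le> 1 \<longrightarrow>
         (\<integral>\<^sup>+ x. ennreal ((grad (curl_field (\<sigma>^2) u) x \<bullet> rot x) ^ 2) \<partial>lborel)
           \<le> ennreal (3 / pi + 55 / (pi * \<sigma>^2) + 4 / (5 * pi * \<sigma>^4))"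
    unfolding Jv unfolding s4 v_def[symmetric] by (intro impI ennreal_leI J_b2[OF vpos apos])
  show ?thesis using part1 part2 part3 by blast
qed


end
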